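(* Let $m$ and $e$ be positive integers with $e\mid m$. Then the greatest common divisor of the integers $(l-1)\frac{m}{e(l)}$, as $l$ ranges over the primes dividing $e$, divides $(e-1)\frac{m}{e}$.
   Context: For a positive integer $t$ and a prime $l$, $t(l)$ denotes the largest power of $l$ dividing $t$. *)

theory Defs
  imports "HOL-Computational_Algebra.Primes"
begin

text \<open>t(l): the largest power of the prime l dividing the positive integer t.\<close>
definition ppart :: "nat \<Rightarrow> nat \<Rightarrow> nat" where
  "ppart t l = l ^ multiplicity l t"

end

theory Submission
  imports Defs "HOL-Number_Theory.Number_Theory"
begin

lemma prod_mset_cong1:
  fixes G :: nat
  assumes "\<And>x. x \<in># M \<Longrightarrow> [x = 1] (mod G)"
  shows "[prod_mset M = 1] (mod G)"
  using assms
proof (induction M)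
  case empty then show ?case by simp
next
  case (add x M)
  then have "[x * prod_mset M = 1 * 1] (mod G)"
    by (intro cong_mult) auto
  then show ?case by simp
qed

theorem mainTheorem12:
  fixes m e :: nat
  assumes "m > 0" and "e > 0" and "e dvd m"
  shows "Gcd {(l - 1) * (m div ppart e l) | l. prime l \<and> l dvd e} dvd (e - 1) * (m div e)"
proof -
  define c where "c = m div e"
  have m: "m = c * e" using assms c_def by simp
  define T where "T = {(l - 1) * (e div ppart e l) | l. prime l \<and> l dvd e}"
  have pdvd: "ppart e l dvd e" for l unfolding ppart_def by (rule multiplicity_dvd)
  have S: "{(l - 1) * (m div ppart e l) | l. prime l \<and> l dvd e} = (*) c ` T"
  proof -
    have dm: "c * e div q = c * (e div q)" if qd: "q dvd e" for q
    proof -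
      obtain k where k: "e = q * k" using qd by blast
      show ?thesis
      proof (cases "q = 0")
        case True then show ?thesis by simp
      next
        case False
        have "c * e div q = (c * k) * q div q" unfolding k by (simp add: ac_simps)
        also have "\<dots> = c * k" using False by simp
        also have "\<dots> = c * (e div q)" unfolding k using False by simp
        finally show ?thesis .
      qed
    qed
    have "(l - 1) * (m div ppart e l) = c * ((l - 1) * (e div ppart e l))" for l
      unfolding m using dm[OF pdvd[of l]] by simp
    note eq = this
    have "{(l - 1) * (m div ppart e l) | l. prime l \<and> l dvd e} = (\<lambda>l. (l - 1) * (m div ppart e l)) ` {l. prime l \<and> l dvd e}"
      by (rule setcompr_eq_image)
    also have "\<dots> = (\<lambda>l. c * ((l - 1) * (e div ppart e l))) ` {l. prime l \<and> l dvd e}"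
      by (intro image_cong refl eq)
    also have "\<dots> = (*) c ` ((\<lambda>l. (l - 1) * (e div ppart e l)) ` {l. prime l \<and> l dvd e})"
      by (simp add: image_image)
    also have "(\<lambda>l. (l - 1) * (e div ppart e l)) ` {l. prime l \<and> l dvd e} = T"
      unfolding T_def by (rule setcompr_eq_image[symmetric])
    finally show ?thesis .
  qed
  define G where "G = Gcd T"
  have GdT: "G dvd (l - 1) * (e div ppart e l)" if "prime l" "l dvd e" for l
    unfolding G_def T_def using that by (intro Gcd_dvd) auto
  have cop: "coprime G e"
  proof (rule ccontr)
    assume "\<not> coprime G e"
    then have "gcd G e \<noteq> 1" using coprime_iff_gcd_eq_1[of G e] by blast
    then obtain p where p: "prime p" "p dvd gcd G e" using prime_factor_nat[of "gcd G e"] by blast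
    then have pe: "p dvd e" and pG: "p dvd G" by simp_all
    have "p dvd (p - 1) * (e div ppart e p)" using GdT[OF p(1) pe] pG by (rule dvd_trans[rotated])
    then have "p dvd p - 1 \<or> p dvd e div ppart e p" using prime_dvd_mult_iff[OF p(1)] by simp
    moreover have "\<not> p dvd p - 1"
    proof
      assume "p dvd p - 1"
      moreover have "0 < p - 1" using prime_gt_1_nat[OF p(1)] by simp
      ultimately have "p \<le> p - 1" by (simp add: dvd_imp_le)
      then show False using prime_gt_1_nat[OF p(1)] by simp
    qed
    moreover have "\<not> p dvd e div ppart e p"
      unfolding ppart_def using assms(2) prime_gt_1_nat[OF p(1)] by (intro multiplicity_decompose) simp_all
    ultimately show False by blast
  qed
  have Gl: "[l = 1] (mod G)" if "prime l" "l dvd e" for l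
  proof -
    have "e div ppart e l dvd e"
      using pdvd[of l] by (metis dvd_div_mult_self dvd_triv_left)
    then have "coprime G (e div ppart e l)"
      using cop by (rule coprime_divisors[OF dvd_refl])
    then have "G dvd l - 1" using GdT[OF that] by (simp add: coprime_dvd_mult_left_iff)
    then show ?thesis using prime_gt_1_nat[OF that(1)]
      using cong_altdef_nat[of 1 l G] by (simp add: cong_sym_eq)
  qed
  have "[prod_mset (prime_factorization e) = 1] (mod G)"
    using assms(2) by (intro prod_mset_cong1 Gl) (auto simp: in_prime_factors_iff)
  then have "[e = 1] (mod G)" using assms(2) by (simp add: prod_mset_prime_factorization_nat)
  then have "G dvd e - 1" by (rule cong_to_1_nat)
  then have "c * G dvd (e - 1) * c" by simp
  moreover have "Gcd ((*) c ` T) = c * G" unfolding G_def by (simp add: Gcd_mult)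
  ultimately show ?thesis unfolding S c_def by simp
qed

end
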